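(* In the HTLC setting described in the context, $\mathcal{B}$ cannot bribe the miners in this manner (i.e. make it a subgame perfect equilibrium for all miners to include unrelated transactions until round $T$ and include $tx^{h}_{\mathcal{B}}$ in round $T$ by offering a fee $f^{h}_{\mathcal{B}}>\frac{f^{h}_{\mathcal{A}}-f}{\lambda_{\min}}+f$) if $\mathcal{A}$'s transaction $tx^{h}_{\mathcal{A}}$ offers a fee $f^{h}_{\mathcal{A}}>\lambda_{\min}\,(v^{\mathrm{dep}}-f)+f$.
   Context: Blockchain model: $n$ miners; miner $i$ has mining power $\lambda_i>0$, $\sum_i\lambda_i=1$, $\lambda_{\min}=\min_i\lambda_i$. Each round exactly one miner is chosen, miner $i$ with probability $\lambda_i$, and creates a block containing one transaction of her choice, receiving its fee. An unrelated transaction offering base fee $f$ is always available. A contract can be redeemed at most once. Miners are rational, non-myopic, with perfect information. HTLC: a contract holding $v^{\mathrm{dep}}$ tokens initiated in block $b_j$, with digest $dig_a=H(pre_a)$ and timeout $T$, redeemable via htlc-A (signature of $\mathcal{A}$ and $pre_a$; any block) or htlc-B (signature of $\mathcal{B}$; only at least $T$ blocks after initiation). $\mathcal{A}$ publishes in the first round $tx^{h}_{\mathcal{A}}$ redeeming via htlc-A with fee $f^{h}_{\mathcal{A}}$; $\mathcal{B}$'s bribing transaction $tx^{h}_{\mathcal{B}}$ redeems via htlc-B and its fee $f^{h}_{\mathcal{B}}$ cannot exceed the contract's tokens $v^{\mathrm{dep}}$. The HTLC game has $T$ rounds creating $b_{j+1},\dots,b_{j+T}$; a miner can include an unrelated transaction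 in any round, $tx^{h}_{\mathcal{A}}$ in any round while the HTLC is unredeemed, and $tx^{h}_{\mathcal{B}}$ only in round $T$ while the HTLC is unredeemed. *)

theory Defs
  imports Complex_Main
begin

text \<open>Miners are the elements of a finite type 'm; miner j is chosen in
each round with probability lam j. A history is the list of (chosen miner, included
transaction) for the rounds played so far; the current round is length h + 1
(round k creates block b_(j+k)).\<close>

datatype act = Unrel | IncA | IncB

type_synonym 'm hist = "('m \<times> act) list"
type_synonym 'm strat_profile = "'m \<Rightarrow> 'm hist \<Rightarrow> act"

definition redeemed :: "'m hist \<Rightarrow> bool" where
  "redeemed h \<longleftrightarrow> (\<exists>x \<in> set h. snd x \<noteq> Unrel)"

definition feasible :: "nat \<Rightarrow> 'm hist \<Rightarrow> act \<Rightarrow> bool" where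
  "feasible T h a \<longleftrightarrow>
     a = Unrel \<or> (a = IncA \<and> \<not> redeemed h) \<or> (a = IncB \<and> length h + 1 = T \<and> \<not> redeemed h)"

definition valid_hist :: "nat \<Rightarrow> 'm hist \<Rightarrow> bool" where
  "valid_hist T h \<longleftrightarrow> length h \<le> T \<and> (\<forall>k < length h. feasible T (take k h) (snd (h ! k)))"

definition valid_strat :: "nat \<Rightarrow> ('m hist \<Rightarrow> act) \<Rightarrow> bool" where
  "valid_strat T s \<longleftrightarrow> (\<forall>h. length h < T \<longrightarrow> feasible T h (s h))"

definition fee :: "real \<Rightarrow> real \<Rightarrow> real \<Rightarrow> act \<Rightarrow> real" where
  "fee f fA fB a = (case a of Unrel \<Rightarrow> f | IncA \<Rightarrow> fA | IncB \<Rightarrow> fB)"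

fun util :: "('m::finite \<Rightarrow> real) \<Rightarrow> real \<Rightarrow> real \<Rightarrow> real \<Rightarrow> 'm strat_profile
              \<Rightarrow> 'm \<Rightarrow> nat \<Rightarrow> 'm hist \<Rightarrow> real" where
  "util lam f fA fB \<sigma> i 0 h = 0"
| "util lam f fA fB \<sigma> i (Suc m) h =
     (\<Sum>j\<in>UNIV. lam j * ((if j = i then fee f fA fB (\<sigma> j h) else 0)
                          + util lam f fA fB \<sigma> i m (h @ [(j, \<sigma> j h)])))"

definition payoff :: "('m::finite \<Rightarrow> real) \<Rightarrow> real \<Rightarrow> real \<Rightarrow> real \<Rightarrow> nat \<Rightarrow> 'm strat_profile
              \<Rightarrow> 'm \<Rightarrow> 'm hist \<Rightarrow> real" where
  "payoff lam f fA fB T \<sigma> i h = util lam f fA fB \<sigma> i (T - length h) h"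

definition is_SPE :: "('m::finite \<Rightarrow> real) \<Rightarrow> real \<Rightarrow> real \<Rightarrow> real \<Rightarrow> nat \<Rightarrow> 'm strat_profile \<Rightarrow> bool" where
  "is_SPE lam f fA fB T \<sigma> \<longleftrightarrow>
     (\<forall>j. valid_strat T (\<sigma> j)) \<and>
     (\<forall>i s h. valid_strat T s \<longrightarrow> valid_hist T h \<longrightarrow>
        payoff lam f fA fB T (\<sigma>(i := s)) i h \<le> payoff lam f fA fB T \<sigma> i h)"

definition bribe_profile :: "nat \<Rightarrow> 'm strat_profile" where
  "bribe_profile T j h = (if length h + 1 = T \<and> \<not> redeemed h then IncB else Unrel)"

end

theory Submission
  imports Defs
begin

lemma util_one:
  "util lam f fA fB \<sigma> i (Suc 0) h = lam i * fee f fA fB (\<sigma> i h)"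
  by (simp add: if_distrib[of "\<lambda>x. lam _ * x"] cong: if_cong)

lemma util_two:
  "util lam f fA fB \<sigma> i (Suc (Suc 0)) h = (\<Sum>j\<in>UNIV. lam j * ((if j = i then fee f fA fB (\<sigma> j h) else 0)
      + lam i * fee f fA fB (\<sigma> i (h @ [(j, \<sigma> j h)]))))"
  by (subst util.simps(2)) (simp only: util_one)

lemma sum_if_lam:
  fixes lam :: "'m::finite \<Rightarrow> real"
  shows "(\<Sum>j\<in>UNIV. lam j * (if j = i then a else b)) = lam i * a + ((\<Sum>j\<in>UNIV. lam j) - lam i) * b"
proof -
  have "(\<Sum>j\<in>UNIV. lam j * (if j = i then a else b)) = lam i * a + (\<Sum>j\<in>UNIV-{i}. lam j * b)"
    by (subst sum.remove[of _ i]) (auto intro!: sum.cong)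
  also have "(\<Sum>j\<in>UNIV-{i}. lam j * b) = ((\<Sum>j\<in>UNIV. lam j) - lam i) * b"
    by (simp add: sum_distrib_right[symmetric] sum_diff1)
  finally show ?thesis .
qed

theorem corollary2:
  fixes lam :: "'m::finite \<Rightarrow> real"
    and f fA fB vdep :: real
    and T :: nat
  assumes lam_pos: "\<And>i. lam i > 0"
    and lam_sum: "(\<Sum>i\<in>UNIV. lam i) = 1"
    and T_ge: "T \<ge> 2"
    and fB_le: "fB \<le> vdep"
    and fA_gt: "fA > Min (range lam) * (vdep - f) + f"
  shows "\<not> is_SPE lam f fA fB T (bribe_profile T)"
proof
  assume spe: "is_SPE lam f fA fB T (bribe_profile T)"
  have "Min (range lam) \<in> range lam" by (rule Min_in) auto
  then obtain i where li: "lam i = Min (range lam)" by (metis imageE)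
  define h0 :: "'m hist" where "h0 = replicate (T - 2) (i, Unrel)"
  define s where "s h = (if h = h0 then IncA else bribe_profile T i h)" for h
  have nr0: "\<not> redeemed h0" by (simp add: redeemed_def h0_def)
  have len0: "length h0 = T - 2" by (simp add: h0_def)
  have vs: "valid_strat T s"
    using nr0 by (auto simp: valid_strat_def s_def feasible_def bribe_profile_def)
  have vh: "valid_hist T h0"
    by (auto simp: valid_hist_def h0_def feasible_def)
  have le: "payoff lam f fA fB T ((bribe_profile T)(i := s)) i h0 \<le> payoff lam f fA fB T (bribe_profile T) i h0"
    using spe vs vh unfolding is_SPE_def by blast
  have two: "T - length h0 = Suc (Suc 0)" using T_ge len0 by simp
  have red1: "redeemed (h0 @ [(j, a)]) \<longleftrightarrow> a \<noteq> Unrel" for j a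
    using nr0 by (auto simp: redeemed_def)
  have P1: "payoff lam f fA fB T (bribe_profile T) i h0 = lam i * f + lam i * fB"
  proof -
    have "payoff lam f fA fB T (bribe_profile T) i h0
      = (\<Sum>j\<in>UNIV. lam j * ((if j = i then f else 0) + lam i * fB))"
      unfolding payoff_def two util_two using T_ge len0 nr0 red1
      by (intro sum.cong) (auto simp: bribe_profile_def fee_def)
    also have "\<dots> = (\<Sum>j\<in>UNIV. lam j * (if j = i then f + lam i * fB else lam i * fB))"
      by (rule sum.cong) auto
    also have "\<dots> = lam i * f + lam i * fB"
      by (subst sum_if_lam) (simp add: lam_sum algebra_simps)
    finally show ?thesis .
  qed
  have P2: "payoff lam f fA fB T ((bribe_profile T)(i := s)) i h0
      = lam i * fA + lam i * (lam i * f + (1 - lam i) * fB)"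
  proof -
    have ne: "h0 @ [x] \<noteq> h0" for x by simp
    have "payoff lam f fA fB T ((bribe_profile T)(i := s)) i h0
      = (\<Sum>j\<in>UNIV. lam j * (if j = i then fA + lam i * f else lam i * fB))"
      unfolding payoff_def two util_two using T_ge len0 nr0 red1
      by (intro sum.cong) (auto simp: bribe_profile_def fee_def s_def)
    also have "\<dots> = lam i * fA + lam i * (lam i * f + (1 - lam i) * fB)"
      by (subst sum_if_lam) (simp add: lam_sum algebra_simps)
    finally show ?thesis .
  qed
  have "fA - f > lam i * (fB - f)"
  proof -
    have "lam i * (fB - f) \<le> lam i * (vdep - f)"
      using fB_le lam_pos[of i] by (intro mult_left_mono) auto
    then show ?thesis using fA_gt li by (simp add: algebra_simps)
  qed
  then have "lam i * (fA - f) > lam i * (lam i * (fB - f))"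
    using lam_pos[of i] by (intro mult_strict_left_mono) auto
  then show False using le P1 P2 by (simp add: algebra_simps)
qed

end
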